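(* Let $a\ge2$, $d\ge1$, $h\ge1$ and $s$ be integers with $\gcd(a,d)=1$ and $1\le s<a$. Let $\mathit{NR}$ be the set of positive integers not representable as $ax_0+\sum_{i=1}^s(ha+id)x_i$ with $x_0,\dots,x_s$ nonnegative integers, and let $S_m=\sum_{n\in\mathit{NR}}n^m$. Then for every integer $m\ge1$, \[ mS_{m-1}=a^{m-1}\sum_{n=0}^{a-1}B_m\!\left(h\lceil n/s\rceil+\frac{nd}{a}\right)-B_m, \] and, as an identity of functions (equivalently of power series about $z=0$), \[ \sum_{m=0}^\infty S_m\frac{z^m}{m!}=\frac{e^{(h\lceil\frac{a-1}{s}\rceil+d)az}-1}{(e^{dz}-1)(e^{az}-1)}+\frac{(e^{ahz}-1)\bigl(e^{\lceil\frac{a-1}{s}\rceil(ha+sd)z}-1\bigr)}{(e^{az}-1)(e^{(ha+sd)z}-1)(e^{-dz}-1)}-\frac{1}{e^z-1}. \]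
   Context: $B_m(x)$ denotes the Bernoulli polynomials, defined by $\frac{te^{tx}}{e^t-1}=\sum_{m\ge0}B_m(x)\frac{t^m}{m!}$, and $B_m=B_m(0)$. $\lceil x\rceil$ is the least integer not less than $x$. *)

theory Defs
  imports "HOL-Analysis.Analysis" "HOL-Computational_Algebra.Formal_Power_Series"
begin

text \<open>Exponential generating function of the Bernoulli polynomials:
  the unique formal power series F with F * (e^t - 1) = t * e^(t x),
  i.e. F = t e^(t x) / (e^t - 1).\<close>
definition bernoulli_gf :: "real \<Rightarrow> real fps" where
  "bernoulli_gf x = (THE F. F * (fps_exp 1 - 1) = fps_X * fps_exp x)"

definition bernpoly :: "nat \<Rightarrow> real \<Rightarrow> real" where
  "bernpoly m x = fact m * fps_nth (bernoulli_gf x) m"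

definition bernoulli :: "nat \<Rightarrow> real" where
  "bernoulli m = bernpoly m 0"

end

theory Submission
  imports Defs "HOL-Number_Theory.Cong"
begin

unbundle no vec_syntax
notation fps_nth (infixl "$" 75)


lemma E_decomp: "fps_exp (1::real) - 1 = fps_X * Abs_fps (\<lambda>n. 1 / fact (Suc n))"
proof (rule fps_ext)
  fix n show "(fps_exp (1::real) - 1) $ n = (fps_X * Abs_fps (\<lambda>n. 1 / fact (Suc n))) $ n"
    by (cases n) (auto simp: algebra_simps)
qed

lemma E_nz: "fps_exp (1::real) - 1 \<noteq> 0"
proof
  assume "fps_exp (1::real) - 1 = 0"
  then have "(fps_exp (1::real) - 1) $ 1 = 0" by simp
  then show False by simp
qed

lemma bgf_ex: "\<exists>!F. F * (fps_exp 1 - 1) = fps_X * fps_exp (x::real)"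
proof
  define D :: "real fps" where "D = Abs_fps (\<lambda>n. 1 / fact (Suc n))"
  have D0: "D $ 0 \<noteq> 0" by (simp add: D_def)
  show "(fps_exp x * inverse D) * (fps_exp 1 - 1) = fps_X * fps_exp x"
    using inverse_mult_eq_1[OF D0] unfolding E_decomp D_def[symmetric]
    by (metis (no_types, lifting) mult.assoc mult.commute mult.right_neutral)
next
  fix F assume "F * (fps_exp 1 - 1) = fps_X * fps_exp (x::real)"
  moreover have "(fps_exp x * inverse (Abs_fps (\<lambda>n. 1 / fact (Suc n)))) * (fps_exp 1 - 1) = fps_X * fps_exp x"
    using inverse_mult_eq_1[of "Abs_fps (\<lambda>n. 1 / fact (Suc n)) :: real fps"] unfolding E_decomp
    by (metis (no_types, lifting) fps_nth_Abs_fps fact_0 div_by_1 one_neq_zero fact_Suc_0 mult.assoc mult.commute mult.right_neutral)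
  ultimately show "F = fps_exp x * inverse (Abs_fps (\<lambda>n. 1 / fact (Suc n)))"
    using E_nz by (metis mult_right_cancel)
qed

lemma bgf: "bernoulli_gf x * (fps_exp 1 - 1) = fps_X * fps_exp x"
  unfolding bernoulli_gf_def by (rule theI'[OF bgf_ex])

lemma bgf_unique: "F * (fps_exp 1 - 1) = fps_X * fps_exp x \<Longrightarrow> bernoulli_gf x = F"
  using bgf bgf_ex by blast

lemma bgf_diff: "bernoulli_gf (x + 1) - bernoulli_gf x = fps_X * fps_exp x"
proof -
  have "(bernoulli_gf (x + 1) - bernoulli_gf x) * (fps_exp 1 - 1) = bernoulli_gf (x + 1) * (fps_exp 1 - 1) - bernoulli_gf x * (fps_exp 1 - 1)"
    by (simp only: left_diff_distrib)
  also have "\<dots> = fps_X * fps_exp (x + 1) - fps_X * fps_exp x" by (simp only: bgf)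
  also have "\<dots> = fps_X * (fps_exp x * fps_exp 1) - fps_X * fps_exp x" by (simp only: fps_exp_add_mult)
  also have "\<dots> = (fps_X * fps_exp x) * (fps_exp 1 - 1)" by (simp only: right_diff_distrib mult.assoc mult_1_right)
  finally have "(bernoulli_gf (x + 1) - bernoulli_gf x) * (fps_exp 1 - 1) = (fps_X * fps_exp x) * (fps_exp 1 - 1)" .
  then show ?thesis using E_nz by (metis mult_right_cancel)
qed

lemma bernpoly_diff:
  assumes "m \<ge> 1"
  shows "bernpoly m (x + 1) - bernpoly m x = real m * x ^ (m - 1)"
proof -
  obtain k where k: "m = Suc k" using assms by (cases m) auto
  have "bernpoly m (x + 1) - bernpoly m x = fact m * (bernoulli_gf (x + 1) - bernoulli_gf x) $ m"
    by (simp add: bernpoly_def right_diff_distrib)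
  also have "\<dots> = fact (Suc k) * (x ^ k / fact k)" unfolding bgf_diff k by simp
  also have "\<dots> = real m * x ^ (m - 1)"
    unfolding k by (simp add: fact_Suc)
  finally show ?thesis .
qed



definition scl :: "real \<Rightarrow> real fps \<Rightarrow> real fps" where
  "scl c F = Abs_fps (\<lambda>n. c ^ n * F $ n)"

lemma scl_mult: "scl c (F * G) = scl c F * scl c G"
proof (rule fps_ext)
  fix n
  have "scl c (F * G) $ n = (\<Sum>i=0..n. c^n * (F$i * G$(n-i)))"
    by (simp add: scl_def fps_mult_nth sum_distrib_left)
  also have "\<dots> = (\<Sum>i=0..n. (c^i * F$i) * (c^(n-i) * G$(n-i)))"
  proof (rule sum.cong[OF refl])
    fix i assume "i \<in> {0..n}"
    then have "c^n = c^i * c^(n-i)" by (metis atLeastAtMost_iff le_add_diff_inverse power_add)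
    then show "c^n * (F$i * G$(n-i)) = (c^i * F$i) * (c^(n-i) * G$(n-i))" by (simp add: mult_ac)
  qed
  also have "\<dots> = (scl c F * scl c G) $ n" by (simp add: scl_def fps_mult_nth)
  finally show "scl c (F * G) $ n = (scl c F * scl c G) $ n" .
qed

lemma scl_exp: "scl c (fps_exp x) = fps_exp (c * x)"
  by (rule fps_ext) (simp add: scl_def power_mult_distrib)

lemma scl_X: "scl c fps_X = fps_const c * fps_X"
  by (rule fps_ext) (simp add: scl_def fps_X_def)

lemma scl_diff: "scl c (F - G) = scl c F - scl c G"
  by (rule fps_ext) (simp add: scl_def algebra_simps)

lemma scl_one: "scl c 1 = 1"
  by (rule fps_ext) (simp add: scl_def)

lemma bgf_mult:
  assumes "a \<ge> 1"
  shows "(\<Sum>r<a. bernoulli_gf (real r / real a)) = fps_const (real a) * scl (1 / real a) (bernoulli_gf 0)"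
proof -
  define E' where "E' = fps_exp (1 / real a) - 1"
  have E'nz: "E' \<noteq> 0"
  proof
    assume "E' = 0" then have "E' $ 1 = 0" by simp
    then show False using assms by (simp add: E'_def)
  qed
  have tel: "(\<Sum>r<a. fps_exp (real r / real a)) * E' = fps_exp 1 - 1"
  proof -
    have "(\<Sum>r<a. fps_exp (real r / real a)) * E' = (\<Sum>r<a. fps_exp (real (Suc r) / real a) - fps_exp (real r / real a))"
      unfolding E'_def sum_distrib_right
    proof (intro sum.cong refl)
      fix r
      have "real (Suc r) / real a = real r / real a + 1 / real a" by (simp add: add_divide_distrib)
      then have "fps_exp (real (Suc r) / real a) = fps_exp (real r / real a) * fps_exp (1 / real a)"
        by (simp only: fps_exp_add_mult)
      then show "fps_exp (real r / real a) * (fps_exp (1 / real a) - 1) = fps_exp (real (Suc r) / real a) - fps_exp (real r / real a)"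
        by (simp only: right_diff_distrib mult_1_right)
    qed
    also have "\<dots> = fps_exp 1 - 1" using assms by (subst sum_lessThan_telescope) simp
    finally show ?thesis .
  qed
  have "(\<Sum>r<a. bernoulli_gf (real r / real a)) * E' * (fps_exp 1 - 1) = fps_X * (fps_exp 1 - 1)"
  proof -
    have "(\<Sum>r<a. bernoulli_gf (real r / real a)) * (fps_exp 1 - 1) = fps_X * (\<Sum>r<a. fps_exp (real r / real a))"
      unfolding sum_distrib_right sum_distrib_left bgf ..
    note H = this
    have "(\<Sum>r<a. bernoulli_gf (real r / real a)) * E' * (fps_exp 1 - 1) = ((\<Sum>r<a. bernoulli_gf (real r / real a)) * (fps_exp 1 - 1)) * E'"
      by (simp only: ac_simps)
    also have "\<dots> = (fps_X * (\<Sum>r<a. fps_exp (real r / real a))) * E'" by (simp only: H)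
    also have "\<dots> = fps_X * (fps_exp 1 - 1)" by (simp only: mult.assoc tel)
    finally show ?thesis .
  qed
  then have L: "(\<Sum>r<a. bernoulli_gf (real r / real a)) * E' = fps_X"
    by (rule mult_right_cancel[THEN iffD1, OF E_nz])
  have "scl (1 / real a) (bernoulli_gf 0 * (fps_exp 1 - 1)) = scl (1 / real a) (fps_X * fps_exp 0)"
    by (simp only: bgf)
  then have P: "scl (1 / real a) (bernoulli_gf 0) * E' = fps_const (1 / real a) * fps_X"
    by (simp add: scl_mult scl_diff scl_exp scl_one scl_X E'_def)
  have C: "fps_const (real a) * fps_const (1/real a) = (1 :: real fps)" using assms by simp
  have R: "(fps_const (real a) * scl (1 / real a) (bernoulli_gf 0)) * E' = fps_X"
  proof -
    have "(fps_const (real a) * scl (1 / real a) (bernoulli_gf 0)) * E' = fps_const (real a) * (scl (1 / real a) (bernoulli_gf 0) * E')"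
      by (simp only: mult.assoc)
    also have "\<dots> = (fps_const (real a) * fps_const (1/real a)) * fps_X" by (simp only: P mult.assoc)
    also have "\<dots> = fps_X" by (simp only: C mult_1)
    finally show ?thesis .
  qed
  show ?thesis by (rule mult_right_cancel[THEN iffD1, OF E'nz]) (simp only: L R)
qed

lemma bernpoly_mult:
  assumes "a \<ge> 1"
  shows "(\<Sum>r<a. bernpoly m (real r / real a)) = real a * (1 / real a) ^ m * bernoulli m"
proof -
  have "(\<Sum>r<a. bernpoly m (real r / real a)) = fact m * (\<Sum>r<a. bernoulli_gf (real r / real a)) $ m"
    by (simp add: bernpoly_def sum_distrib_left fps_sum_nth)
  also have "\<dots> = fact m * (real a * ((1 / real a) ^ m * bernoulli_gf 0 $ m))"
    using assms by (simp add: bgf_mult scl_def)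
  also have "\<dots> = real a * (1 / real a) ^ m * bernoulli m"
    by (simp add: bernoulli_def bernpoly_def)
  finally show ?thesis .
qed




definition cc :: "nat \<Rightarrow> nat \<Rightarrow> nat" where "cc s n = (n + s - 1) div s"

lemma cc_bounds:
  assumes "s \<ge> 1"
  shows "n \<le> s * cc s n" "s * cc s n < n + s"
proof -
  have e: "cc s n * s + (n + s - 1) mod s = n + s - 1" unfolding cc_def by (rule div_mult_mod_eq)
  have m: "(n + s - 1) mod s < s" using assms by simp
  have e': "s * cc s n + (n + s - 1) mod s = n + s - 1" using e by (simp add: mult.commute)
  show "n \<le> s * cc s n" using e' m assms by arith
  show "s * cc s n < n + s" using e' m assms by arith
qed

lemma cc_ceiling:
  assumes "s \<ge> 1"
  shows "\<lceil>real n / real s\<rceil> = int (cc s n)"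
proof (rule ceiling_unique)
  have s: "real s > 0" using assms by simp
  have "real n \<le> real s * real (cc s n)" using cc_bounds(1)[OF assms, of n] by (metis of_nat_le_iff of_nat_mult)
  then show "real n / real s \<le> real_of_int (int (cc s n))" using s by (simp add: divide_le_eq mult.commute)
  have "real s * real (cc s n) < real n + real s" using cc_bounds(2)[OF assms, of n] by (metis of_nat_less_iff of_nat_mult of_nat_add)
  then show "real_of_int (int (cc s n)) - 1 < real n / real s" using s by (simp add: less_divide_eq algebra_simps)
qed

lemma cc_mono: "n \<le> m \<Longrightarrow> cc s n \<le> cc s m"
  unfolding cc_def by (intro div_le_mono) simp

lemma cc_mult: assumes "s \<ge> 1" shows "cc s (s * X) = X"
proof -
  have eq: "s * X + s - 1 = (s - 1) + X * s" using assms by (simp add: mult.commute)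
  have "cc s (s * X) = ((s - 1) + X * s) div s" unfolding cc_def eq ..
  also have "\<dots> = X + (s - 1) div s" using div_mult_self1[of s "s - 1" X] assms by linarith
  also have "\<dots> = X" using assms by simp
  finally show ?thesis .
qed

lemma sum_if_eq:
  assumes "t \<in> A" "finite A"
  shows "(\<Sum>i\<in>A. f i * (if i = t then k else 0)) = f t * (k::nat)"
proof -
  have "(\<Sum>i\<in>A. f i * (if i = t then k else 0)) = (\<Sum>i\<in>A. if i = t then f t * k else 0)"
    by (rule sum.cong) auto
  also have "\<dots> = f t * k" using assms by (simp add: sum.delta)
  finally show ?thesis .
qed

lemma cc0: "s \<ge> 1 \<Longrightarrow> cc s 0 = 0"
  unfolding cc_def by simp

context
  fixes a d h s :: nat
  assumes a2: "a \<ge> 2" and d1: "d \<ge> 1" and h1: "h \<ge> 1" and g: "gcd a d = 1" and s1: "1 \<le> s" and sa: "s < a"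
begin

definition T :: "nat set" where
  "T = {m. \<exists>(x0::nat) (x::nat \<Rightarrow> nat). m = a * x0 + (\<Sum>i=1..s. (h * a + i * d) * x i)}"

definition ww :: "nat \<Rightarrow> nat" where "ww n = h * a * cc s n + n * d"
definition rr :: "nat \<Rightarrow> nat" where "rr n = n * d mod a"
definition qq :: "nat \<Rightarrow> nat" where "qq n = ww n div a"

lemma ww_mod: "ww n mod a = rr n"
proof -
  have "h * a * cc s n + n * d = n * d + (h * cc s n) * a" by (simp add: mult_ac)
  then show ?thesis unfolding ww_def rr_def by (simp only: mod_mult_self1)
qed

lemma rr_qq: "rr n + a * qq n = ww n"
  unfolding qq_def ww_mod[symmetric] by simp

lemma rr_less: "rr n < a"
  unfolding rr_def using a2 by simp

lemma rr_inj: "inj_on rr {..<a}"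
proof
  fix n n' assume n: "n \<in> {..<a}" and n': "n' \<in> {..<a}" and e: "rr n = rr n'"
  have cop: "coprime d a" using g by (simp add: coprime_iff_gcd_eq_1 gcd.commute)
  have "[n * d = n' * d] (mod a)" using e unfolding rr_def cong_def .
  then have "[n = n'] (mod a)" using cong_mult_rcancel_nat[OF cop] by simp
  then show "n = n'" using n n' cong_less_modulus_unique_nat by auto
qed

lemma rr_surj: "rr ` {..<a} = {..<a}"
  by (rule endo_inj_surj) (auto simp: rr_less rr_inj)

lemma rr_bij: "bij_betw rr {..<a} {..<a}"
  using rr_inj rr_surj by (simp add: bij_betw_def)

lemma T_add: "m \<in> T \<Longrightarrow> m + a * k \<in> T"
proof -
  assume "m \<in> T"
  then obtain x0 x where "m = a * x0 + (\<Sum>i=1..s. (h * a + i * d) * x i)" unfolding T_def by blast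
  then have "m + a * k = a * (x0 + k) + (\<Sum>i=1..s. (h * a + i * d) * x i)" by (simp add: algebra_simps)
  then show ?thesis unfolding T_def by blast
qed

lemma ww_in_T: "ww n \<in> T"
proof (cases "n = 0")
  case True
  then show ?thesis unfolding T_def ww_def using cc0[OF s1]
    by (intro CollectI exI[of _ 0] exI[of _ "\<lambda>_. 0"]) simp
next
  case False
  define c where "c = cc s n"
  have b1: "n \<le> s * c" and b2: "s * c < n + s" using cc_bounds[OF s1, of n] by (auto simp: c_def)
  have c1: "c \<ge> 1" using b1 False by (cases c) auto
  define t where "t = n - s * (c - 1)"
  have sc: "s * c = s * (c - 1) + s" using c1 by (cases c) auto
  have t1: "1 \<le> t" and ts: "t \<le> s" using b1 b2 sc unfolding t_def by auto
  have nt: "n = s * (c - 1) + t" using b2 sc unfolding t_def by auto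
  define x where "x = (\<lambda>i::nat. (if i = s then c - 1 else 0) + (if i = t then 1 else 0))"
  have "(\<Sum>i=1..s. (h * a + i * d) * x i) = (\<Sum>i=1..s. (h * a + i * d) * (if i = s then c - 1 else 0)) + (\<Sum>i=1..s. (h * a + i * d) * (if i = t then 1 else 0))"
    unfolding x_def by (simp only: distrib_left sum.distrib)
  also have "\<dots> = (h * a + s * d) * (c - 1) + (h * a + t * d) * 1"
    using s1 t1 ts by (simp only: sum_if_eq atLeastAtMost_iff finite_atLeastAtMost order_refl)
  also have "\<dots> = (h * a + s * d) * (c - 1) + (h * a + t * d)" by simp
  also have "\<dots> = ww n"
  proof -
    have "ww n = h * a * ((c - 1) + 1) + (s * (c - 1) + t) * d" unfolding ww_def c_def[symmetric] using c1 nt by simp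
    then show ?thesis by (simp add: algebra_simps)
  qed
  finally have "ww n = a * 0 + (\<Sum>i=1..s. (h * a + i * d) * x i)" by simp
  then show ?thesis unfolding T_def by blast
qed

lemma T_lower:
  assumes "m \<in> T"
  shows "\<exists>n<a. rr n = m mod a \<and> ww n \<le> m"
proof -
  obtain x0 x where m: "m = a * x0 + (\<Sum>i=1..s. (h * a + i * d) * x i)" using assms unfolding T_def by blast
  define X where "X = (\<Sum>i=1..s. x i)"
  define Y where "Y = (\<Sum>i=1..s. i * x i)"
  have m2: "m = a * x0 + h * a * X + d * Y"
    unfolding m X_def Y_def by (simp add: algebra_simps sum.distrib sum_distrib_left)
  have YX: "Y \<le> s * X" unfolding Y_def X_def sum_distrib_left
    by (intro sum_mono) simp
  define n where "n = Y mod a"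
  have na: "n < a" using a2 unfolding n_def by simp
  have nY: "n \<le> Y" unfolding n_def by simp
  have "cc s n \<le> cc s (s * X)" using nY YX by (intro cc_mono) simp
  then have cX: "cc s n \<le> X" using cc_mult[OF s1] by simp
  have "ww n \<le> h * a * X + d * Y" unfolding ww_def using cX nY
    by (intro add_mono mult_le_mono2) (simp_all add: mult.commute)
  then have "ww n \<le> m" using m2 by simp
  moreover have "rr n = m mod a"
  proof -
    have "m mod a = (d * Y) mod a" unfolding m2 by (simp add: mult.assoc mod_add_left_eq[symmetric] mod_add_right_eq[symmetric])
    also have "\<dots> = (d * n) mod a" unfolding n_def by (simp add: mod_mult_right_eq)
    finally show ?thesis unfolding rr_def by (simp add: mult.commute)
  qed
  ultimately show ?thesis using na by blast
qed

lemma T_char: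
  assumes "n < a" "rr n = m mod a"
  shows "m \<in> T \<longleftrightarrow> ww n \<le> m"
proof
  assume "m \<in> T"
  then obtain n' where n': "n' < a" "rr n' = m mod a" "ww n' \<le> m" using T_lower by blast
  have "n' = n" using rr_inj n' assms by (auto simp: inj_on_def)
  then show "ww n \<le> m" using n' by simp
next
  assume le: "ww n \<le> m"
  have "ww n mod a = m mod a" using assms ww_mod by simp
  then have "a dvd (m - ww n)" using mod_eq_dvd_iff_nat[OF le, of a] by simp
  then obtain k where k: "m - ww n = a * k" by blast
  have "m = ww n + a * k" using k le by simp
  then show "m \<in> T" using T_add[OF ww_in_T] by simp
qed

definition II :: "(nat \<times> nat) set" where "II = Sigma {..<a} (\<lambda>n. {..<qq n})"

definition pp :: "nat \<times> nat \<Rightarrow> nat" where "pp = (\<lambda>(n, j). rr n + a * j)"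

lemma pp_inj: "inj_on pp II"
proof (rule inj_onI)
  fix u v assume u: "u \<in> II" and v: "v \<in> II" and e: "pp u = pp v"
  obtain n j where u': "u = (n, j)" by (cases u)
  obtain n' j' where v': "v = (n', j')" by (cases v)
  have e2: "rr n + a * j = rr n' + a * j'" using e u' v' by (simp add: pp_def)
  then have "(rr n + a * j) mod a = (rr n' + a * j') mod a" by simp
  then have "rr n = rr n'" using rr_less by simp
  moreover have "n < a" "n' < a" using u v u' v' by (auto simp: II_def)
  ultimately have "n = n'" using rr_inj by (auto simp: inj_on_def)
  then have "j = j'" using e2 a2 by simp
  then show "u = v" using u' v' \<open>n = n'\<close> by simp
qed

lemma pp_image: "pp ` II = {m. m > 0 \<and> m \<notin> T}"
proof (intro equalityI subsetI)
  fix m assume "m \<in> pp ` II"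
  then obtain n j where nj: "n < a" "j < qq n" and m: "m = rr n + a * j" by (auto simp: II_def pp_def)
  have mm: "m mod a = rr n" using m rr_less by simp
  have "m < ww n" using nj(2) m rr_qq[of n] a2 by (metis add_less_cancel_left mult_less_cancel1 not_numeral_le_zero le0 zero_less_iff_neq_zero gr_zeroI order.strict_trans1 le_less_trans linorder_not_le)
  then have "m \<notin> T" using T_char[OF nj(1) mm[symmetric]] by simp
  moreover have "m > 0"
  proof (rule ccontr)
    assume "\<not> m > 0" then have "m = 0" by simp
    then have "rr n = rr 0" using mm by (simp add: rr_def)
    then have "n = 0" using rr_inj nj(1) a2 by (auto simp: inj_on_def)
    then show False using nj(2) by (simp add: qq_def ww_def cc0[OF s1])
  qed
  ultimately show "m \<in> {m. m > 0 \<and> m \<notin> T}" by simp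
next
  fix m assume "m \<in> {m. m > 0 \<and> m \<notin> T}"
  then have mT: "m \<notin> T" by simp
  have "m mod a \<in> rr ` {..<a}" using rr_surj a2 by simp
  then obtain n where n: "n < a" "rr n = m mod a" by auto
  have lt: "m < ww n" using T_char[OF n] mT by simp
  have m: "m = rr n + a * (m div a)" using n by simp
  have "a * (m div a) < a * qq n" using lt m rr_qq[of n] by linarith
  then have "m div a < qq n" by simp
  then have "(n, m div a) \<in> II" using n by (simp add: II_def)
  then show "m \<in> pp ` II" using m by (metis pp_def case_prod_conv image_eqI)
qed

lemma sum_NR:
  "(\<Sum>m\<in>{m. m > 0 \<and> m \<notin> T}. f m) = (\<Sum>n<a. \<Sum>j<qq n. f (rr n + a * j))"
proof -
  have "(\<Sum>m\<in>{m. m > 0 \<and> m \<notin> T}. f m) = (\<Sum>u\<in>II. f (pp u))"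
    unfolding pp_image[symmetric] by (rule sum.reindex[OF pp_inj, unfolded comp_def])
  also have "\<dots> = (\<Sum>n<a. \<Sum>j<qq n. f (rr n + a * j))"
    by (subst sum.Sigma) (auto intro!: sum.cong simp: II_def pp_def)
  finally show ?thesis .
qed

end



lemma cc_unique:
  assumes "s \<ge> 1" "n \<le> s * c" "s * c < n + s"
  shows "cc s n = c"
proof -
  have b1: "n \<le> s * cc s n" and b2: "s * cc s n < n + s" using cc_bounds[OF assms(1)] by auto
  have "\<not> c + 1 \<le> cc s n"
  proof
    assume "c + 1 \<le> cc s n"
    then have "s * (c + 1) \<le> s * cc s n" by (rule mult_le_mono2)
    then show False using assms b2 by simp
  qed
  moreover have "\<not> cc s n + 1 \<le> c"
  proof
    assume "cc s n + 1 \<le> c"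
    then have "s * (cc s n + 1) \<le> s * c" by (rule mult_le_mono2)
    then show False using assms b1 b2 by simp
  qed
  ultimately show ?thesis by simp
qed

lemma cc_Suc_dvd: "s \<ge> 1 \<Longrightarrow> s dvd N \<Longrightarrow> cc s (Suc N) = cc s N + 1 \<and> N = s * cc s N"
proof -
  assume s: "s \<ge> 1" and "s dvd N"
  then obtain k where k: "N = s * k" by blast
  have "cc s N = k" using k cc_mult[OF s] by simp
  moreover have "cc s (Suc N) = k + 1" using k s by (intro cc_unique) auto
  ultimately show ?thesis using k by simp
qed

lemma cc_Suc_ndvd: "s \<ge> 1 \<Longrightarrow> \<not> s dvd N \<Longrightarrow> cc s (Suc N) = cc s N"
proof -
  assume s: "s \<ge> 1" and nd: "\<not> s dvd N"
  have b1: "N \<le> s * cc s N" and b2: "s * cc s N < N + s" using cc_bounds[OF s] by auto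
  have "N \<noteq> s * cc s N" using nd by (metis dvd_triv_left)
  then show ?thesis using b1 b2 s by (intro cc_unique) auto
qed

context
  fixes a d h s :: nat
  assumes a2: "a \<ge> 2" and d1: "d \<ge> 1" and h1: "h \<ge> 1" and g: "gcd a d = 1" and s1: "1 \<le> s" and sa: "s < a"
begin

lemma abel:
  fixes X :: complex
  shows "(X^d - 1) * (\<Sum>n<Suc N. X ^ ww a d h s n) =
    X ^ (h * a * cc s N) * X ^ (Suc N * d) - 1 - X^d * (X^(a*h) - 1) * (\<Sum>k<cc s N. X ^ ((h*a + s*d) * k))"
proof (induction N)
  case 0
  then show ?case using cc0[OF s1] by (simp add: ww_def[OF a2 d1 h1 g s1 sa])
next
  case (Suc N)
  define c where "c = cc s N"
  define A where "A = X ^ (h * a * c)"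
  define D where "D = X ^ d"
  define H where "H = X ^ (h * a)"
  define Q where "Q = X ^ (N * d)"
  define G where "G = (\<Sum>k<c. X ^ ((h*a + s*d) * k))"
  have IH: "(X^d - 1) * (\<Sum>n<Suc N. X ^ ww a d h s n) = A * (Q * D) - 1 - D * (H - 1) * G"
    using Suc.IH unfolding A_def D_def H_def Q_def G_def c_def by (simp add: power_add mult.commute mult.left_commute)
  have wS: "ww a d h s (Suc N) = h * a * cc s (Suc N) + Suc N * d"
    by (simp add: ww_def[OF a2 d1 h1 g s1 sa])
  show ?case
  proof (cases "s dvd N")
    case True
    with cc_Suc_dvd[OF s1] have cS: "cc s (Suc N) = c + 1" and Nc: "N = s * c" by (auto simp: c_def)
    have P: "X ^ ((h*a + s*d) * c) = A * Q"
      unfolding A_def Q_def Nc by (simp add: power_add[symmetric] algebra_simps)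
    have "(X^d - 1) * (\<Sum>n<Suc (Suc N). X ^ ww a d h s n) = (X^d - 1) * (\<Sum>n<Suc N. X ^ ww a d h s n) + (X^d - 1) * X ^ ww a d h s (Suc N)"
      by (simp add: algebra_simps)
    also have "\<dots> = A * (Q * D) - 1 - D * (H - 1) * G + (D - 1) * (A * H * (Q * D))"
      unfolding IH wS cS A_def H_def Q_def D_def
      by (simp add: power_add power_mult algebra_simps)
    also have "\<dots> = (A * H) * (Q * D * D) - 1 - D * (H - 1) * (G + A * Q)"
      by (simp add: algebra_simps)
    also have "\<dots> = X ^ (h * a * cc s (Suc N)) * X ^ (Suc (Suc N) * d) - 1 - X^d * (X^(a*h) - 1) * (\<Sum>k<cc s (Suc N). X ^ ((h*a + s*d) * k))"
    proof -
      have Sk: "(\<Sum>k<cc s (Suc N). X ^ ((h*a + s*d) * k)) = G + A * Q"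
        unfolding cS G_def using P by simp
      show ?thesis unfolding Sk cS by (simp add: G_def A_def H_def Q_def D_def Nc power_add algebra_simps)
    qed
    finally show ?thesis .
  next
    case False
    with cc_Suc_ndvd[OF s1] have cS: "cc s (Suc N) = c" by (auto simp: c_def)
    have "(X^d - 1) * (\<Sum>n<Suc (Suc N). X ^ ww a d h s n) = (X^d - 1) * (\<Sum>n<Suc N. X ^ ww a d h s n) + (X^d - 1) * X ^ ww a d h s (Suc N)"
      by (simp add: algebra_simps)
    also have "\<dots> = A * (Q * D) - 1 - D * (H - 1) * G + (D - 1) * (A * (Q * D))"
      unfolding IH wS cS A_def H_def Q_def D_def
      by (simp add: power_add power_mult algebra_simps)
    also have "\<dots> = A * (Q * D * D) - 1 - D * (H - 1) * G"
      by (simp add: algebra_simps)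
    also have "\<dots> = X ^ (h * a * cc s (Suc N)) * X ^ (Suc (Suc N) * d) - 1 - X^d * (X^(a*h) - 1) * (\<Sum>k<cc s (Suc N). X ^ ((h*a + s*d) * k))"
      unfolding cS G_def A_def H_def Q_def D_def
      by (simp add: power_add algebra_simps)
    finally show ?thesis .
  qed
qed


lemma part1:
  assumes m1: "m \<ge> 1"
  shows "real m * (\<Sum>x\<in>{x. x > 0 \<and> x \<notin> T a d h s}. real x ^ (m - 1)) =
    real a ^ (m - 1) * (\<Sum>n=0..a-1. bernpoly m (real h * of_int \<lceil>real n / real s\<rceil> + real n * real d / real a)) - bernoulli m"
proof -
  note ctx = a2 d1 h1 g s1 sa
  have ap: "real a > 0" using a2 by simp
  have step: "real m * (\<Sum>j<qq a d h s n. real (rr a d n + a * j) ^ (m - 1)) =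
      real a ^ (m - 1) * (bernpoly m (real (ww a d h s n) / real a) - bernpoly m (real (rr a d n) / real a))" for n
  proof -
    define y where "y = real (rr a d n) / real a"
    define q where "q = qq a d h s n"
    have e1: "real (rr a d n + a * j) = real a * (y + real j)" for j
      using ap by (simp add: y_def field_simps)
    have "real m * (\<Sum>j<q. real (rr a d n + a * j) ^ (m - 1)) = real a ^ (m - 1) * (\<Sum>j<q. real m * (y + real j) ^ (m - 1))"
      unfolding e1 by (simp add: power_mult_distrib sum_distrib_left mult_ac)
    also have "(\<Sum>j<q. real m * (y + real j) ^ (m - 1)) = (\<Sum>j<q. bernpoly m (y + real (Suc j)) - bernpoly m (y + real j))"
    proof (rule sum.cong[OF refl])
      fix j
      have "y + real (Suc j) = (y + real j) + 1" by simp
      then show "real m * (y + real j) ^ (m - 1) = bernpoly m (y + real (Suc j)) - bernpoly m (y + real j)"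
        using bernpoly_diff[OF m1, of "y + real j"] by (simp only:)
    qed
    also have "\<dots> = bernpoly m (y + real q) - bernpoly m (y + real 0)"
      by (rule sum_lessThan_telescope)
    also have "y + real q = real (ww a d h s n) / real a"
    proof -
      have "real (ww a d h s n) = real (rr a d n) + real a * real q"
        using rr_qq[OF ctx, of n] unfolding q_def by (metis of_nat_add of_nat_mult)
      then show ?thesis using ap by (simp add: y_def field_simps)
    qed
    finally show ?thesis by (simp add: y_def q_def)
  qed
  have wweq: "real (ww a d h s n) / real a = real h * of_int \<lceil>real n / real s\<rceil> + real n * real d / real a" for n
    using ap unfolding cc_ceiling[OF s1] ww_def[OF ctx] by (simp add: field_simps)
  have mult: "(\<Sum>n<a. bernpoly m (real (rr a d n) / real a)) = real a * (1 / real a) ^ m * bernoulli m"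
    using sum.reindex_bij_betw[OF rr_bij[OF ctx], of "\<lambda>r. bernpoly m (real r / real a)"] bernpoly_mult[of a m] a2
    by simp
  have one: "real a ^ (m - 1) * (real a * (1 / real a) ^ m) = 1"
  proof -
    have "real a ^ (m - 1) * real a = real a ^ m" using m1 by (metis power_minus_mult not_one_le_zero gr0I)
    then show ?thesis using ap by (simp add: power_one_over field_simps)
  qed
  have ivl: "{0..a-1} = {..<a}" using a2 by auto
  have "real m * (\<Sum>x\<in>{x. x > 0 \<and> x \<notin> T a d h s}. real x ^ (m - 1)) =
      (\<Sum>n<a. real m * (\<Sum>j<qq a d h s n. real (rr a d n + a * j) ^ (m - 1)))"
    unfolding sum_NR[OF ctx] by (simp add: sum_distrib_left)
  also have "\<dots> = (\<Sum>n<a. real a ^ (m - 1) * (bernpoly m (real (ww a d h s n) / real a) - bernpoly m (real (rr a d n) / real a)))"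
    unfolding step ..
  also have "\<dots> = real a ^ (m - 1) * (\<Sum>n<a. bernpoly m (real (ww a d h s n) / real a)) - real a ^ (m - 1) * (\<Sum>n<a. bernpoly m (real (rr a d n) / real a))"
    by (simp add: sum_distrib_left sum_subtractf right_diff_distrib)
  also have "\<dots> = real a ^ (m - 1) * (\<Sum>n=0..a-1. bernpoly m (real h * of_int \<lceil>real n / real s\<rceil> + real n * real d / real a)) - bernoulli m"
    unfolding mult wweq ivl using one by (simp add: mult.assoc[symmetric])
  finally show ?thesis .
qed

end



lemma alg:
  fixes L W Sr A0 B G CC Xd Ea E1 Ed EP Emd :: complex
  assumes "Ea \<noteq> 0" "E1 \<noteq> 0" "EP \<noteq> 0" "Xd \<noteq> 0" "Xd \<noteq> 1"
    and "Ea * L = W - Sr" "E1 * Sr = Ea" "(Xd - 1) * W = A0 - 1 - Xd * B * G" "CC = EP * G"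
    and "Emd = inverse Xd - 1" "Ed = Xd - 1"
  shows "L = (A0 - 1) / (Ed * Ea) + B * CC / (Ea * EP * Emd) - 1 / E1"
proof -
  have Ed0: "Ed \<noteq> 0" using assms by simp
  have L: "L = W / Ea - 1 / E1"
  proof -
    have Sr: "Sr = Ea / E1" using assms by (simp add: field_simps)
    have "L = (W - Sr) / Ea" using assms(1) assms(6) by (simp add: eq_divide_eq mult.commute)
    then have "L = (W - Ea / E1) / Ea" using Sr by simp
    then show ?thesis using assms(1) by (simp add: diff_divide_distrib)
  qed
  have "Ed * W = A0 - 1 - Xd * B * G" using assms(8) assms(11) by simp
  then have W: "W = (A0 - 1 - Xd * B * G) / Ed" using Ed0 by (simp add: eq_divide_eq mult.commute)
  have "Emd * Xd = 1 - Xd" unfolding assms(10) using assms(4) by (simp add: left_diff_distrib)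
  also have "\<dots> = - Ed" using assms(11) by simp
  finally have e: "Emd * Xd = - Ed" .
  have Emd: "Emd = - Ed / Xd"
  proof -
    have "Emd = (Emd * Xd) / Xd" using assms(4) by simp
    also have "\<dots> = - Ed / Xd" by (simp only: e)
    finally show ?thesis .
  qed
  have Bc: "B * CC / (Ea * EP * Emd) = - (Xd * B * G) / (Ed * Ea)"
    using assms Ed0 unfolding Emd by (simp add: field_simps)
  show ?thesis unfolding L W Bc using assms(1,2) Ed0 by (simp add: field_simps)
qed




context
  fixes a d h s :: nat
  assumes a2: "a \<ge> 2" and d1: "d \<ge> 1" and h1: "h \<ge> 1" and g: "gcd a d = 1" and s1: "1 \<le> s" and sa: "s < a"
begin

lemma part2:
  fixes z :: complex
  assumes nz: "exp (of_nat d * z) - 1 \<noteq> 0" "exp (of_nat a * z) - 1 \<noteq> 0"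
            "exp (of_nat (h * a + s * d) * z) - 1 \<noteq> 0" "exp (- (of_nat d * z)) - 1 \<noteq> 0"
            "exp z - 1 \<noteq> 0"
  shows "(\<Sum>x\<in>{x. x > 0 \<and> x \<notin> T a d h s}. exp (of_nat x * z)) =
              ((exp ((of_nat h * of_int \<lceil>real (a - 1) / real s\<rceil> + of_nat d) * of_nat a * z) - 1)
                 / ((exp (of_nat d * z) - 1) * (exp (of_nat a * z) - 1))
               + ((exp (of_nat a * of_nat h * z) - 1)
                   * (exp (of_int \<lceil>real (a - 1) / real s\<rceil> * (of_nat h * of_nat a + of_nat s * of_nat d) * z) - 1))
                 / ((exp (of_nat a * z) - 1) * (exp ((of_nat h * of_nat a + of_nat s * of_nat d) * z) - 1)
                    * (exp (- (of_nat d * z)) - 1))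
               - 1 / (exp z - 1))"
proof -
  note ctx = a2 d1 h1 g s1 sa
  define X where "X = exp z"
  define K where "K = cc s (a - 1)"
  define P where "P = h * a + s * d"
  have X0: "X \<noteq> 0" unfolding X_def by simp
  have ex: "exp (of_nat k * z) = X ^ k" for k unfolding X_def by (rule exp_of_nat_mult)
  have ceilK: "\<lceil>real (a - 1) / real s\<rceil> = int K" unfolding K_def by (rule cc_ceiling[OF s1])
  have r1: "exp ((of_nat h * of_int \<lceil>real (a - 1) / real s\<rceil> + of_nat d) * of_nat a * z) = X ^ ((h * K + d) * a)"
    unfolding ex[symmetric] ceilK by simp
  have r2: "exp (of_nat a * of_nat h * z) = X ^ (a * h)"
    unfolding ex[symmetric] by simp
  have r3: "exp (of_int \<lceil>real (a - 1) / real s\<rceil> * (of_nat h * of_nat a + of_nat s * of_nat d) * z) = X ^ (K * P)"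
    unfolding ex[symmetric] ceilK P_def by simp
  have r4: "exp ((of_nat h * of_nat a + of_nat s * of_nat d) * z) = X ^ P"
    unfolding ex[symmetric] P_def by simp
  have r5: "exp (- (of_nat d * z)) = inverse (X ^ d)"
    by (simp add: exp_minus ex)
  have r6: "exp (of_nat d * z) = X ^ d" "exp (of_nat a * z) = X ^ a" "exp z = X"
    by (simp_all add: ex X_def)
  have nz': "X ^ d - 1 \<noteq> 0" "X ^ a - 1 \<noteq> 0" "X ^ P - 1 \<noteq> 0" "X - 1 \<noteq> 0"
    using nz unfolding ex X_def[symmetric] P_def by auto
  define L where "L = (\<Sum>x\<in>{x. x > 0 \<and> x \<notin> T a d h s}. X ^ x)"
  define W where "W = (\<Sum>n<a. X ^ ww a d h s n)"
  define Sr where "Sr = (\<Sum>r<a. X ^ r)"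
  define G where "G = (\<Sum>k<K. X ^ (P * k))"
  have LL: "(\<Sum>x\<in>{x. x > 0 \<and> x \<notin> T a d h s}. exp (of_nat x * z)) = L"
    unfolding L_def ex ..
  have geo: "(X ^ a - 1) * (\<Sum>j<qq a d h s n. X ^ (rr a d n + a * j)) = X ^ ww a d h s n - X ^ rr a d n" for n
  proof -
    have "(X ^ a - 1) * (\<Sum>j<qq a d h s n. X ^ (rr a d n + a * j)) = X ^ rr a d n * ((X ^ a - 1) * (\<Sum>j<qq a d h s n. (X ^ a) ^ j))"
    proof -
      have "(\<Sum>j<qq a d h s n. X ^ (rr a d n + a * j)) = X ^ rr a d n * (\<Sum>j<qq a d h s n. (X ^ a) ^ j)"
        by (simp add: power_add power_mult sum_distrib_left)
      then show ?thesis by (simp only: mult.left_commute)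
    qed
    also have "\<dots> = X ^ rr a d n * ((X ^ a) ^ qq a d h s n - 1)"
      by (simp add: power_diff_1_eq)
    also have "\<dots> = X ^ ww a d h s n - X ^ rr a d n"
      unfolding rr_qq[OF ctx, symmetric] by (simp add: power_add power_mult right_diff_distrib)
    finally show ?thesis .
  qed
  have e1: "(X ^ a - 1) * L = W - Sr"
  proof -
    have "(X ^ a - 1) * L = (\<Sum>n<a. (X ^ a - 1) * (\<Sum>j<qq a d h s n. X ^ (rr a d n + a * j)))"
      unfolding L_def sum_NR[OF ctx] by (simp add: sum_distrib_left)
    also have "\<dots> = W - (\<Sum>n<a. X ^ rr a d n)"
      unfolding geo W_def by (simp add: sum_subtractf)
    also have "(\<Sum>n<a. X ^ rr a d n) = Sr"
      unfolding Sr_def using sum.reindex_bij_betw[OF rr_bij[OF ctx], of "\<lambda>r. X ^ r"] by simp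
    finally show ?thesis .
  qed
  have e2: "(X - 1) * Sr = X ^ a - 1" unfolding Sr_def by (simp add: power_diff_1_eq)
  have e3: "(X ^ d - 1) * W = X ^ ((h * K + d) * a) - 1 - X ^ d * (X ^ (a * h) - 1) * G"
  proof -
    have a1: "Suc (a - 1) = a" using a2 by simp
    have "(X ^ d - 1) * W = X ^ (h * a * K) * X ^ (a * d) - 1 - X^d * (X^(a*h) - 1) * G"
      using abel[OF ctx, of X "a - 1"] unfolding a1 W_def G_def K_def P_def by simp
    also have "X ^ (h * a * K) * X ^ (a * d) = X ^ ((h * K + d) * a)"
      by (simp add: power_add[symmetric] algebra_simps)
    finally show ?thesis .
  qed
  have e4: "X ^ (K * P) - 1 = (X ^ P - 1) * G"
  proof -
    have "(X ^ P) ^ K - 1 = (X ^ P - 1) * (\<Sum>k<K. (X ^ P) ^ k)" by (rule power_diff_1_eq)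
    then show ?thesis unfolding G_def by (simp add: power_mult[symmetric] mult.commute)
  qed
  have Xd0: "X ^ d \<noteq> 0" using X0 by simp
  have Xd1: "X ^ d \<noteq> 1" using nz'(1) by simp
  show ?thesis
    unfolding LL r1 r2 r3 r4 r5 r6
    by (rule alg[OF nz'(2) nz'(4) nz'(3) Xd0 Xd1 e1 e2 e3 e4 refl refl])
qed

end


theorem mainTheorem7:
  fixes a d h s :: nat
  assumes "a \<ge> 2" and "d \<ge> 1" and "h \<ge> 1"
    and "gcd a d = 1" and "1 \<le> s" and "s < a"
  defines "NR \<equiv> {n::nat. n > 0 \<and>
              \<not> (\<exists>(x0::nat) (x::nat \<Rightarrow> nat). n = a * x0 + (\<Sum>i=1..s. (h * a + i * d) * x i))}"
  defines "S \<equiv> (\<lambda>m::nat. \<Sum>n\<in>NR. (real n) ^ m)"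
  shows "(\<forall>m::nat. m \<ge> 1 \<longrightarrow>
            real m * S (m - 1) =
              real a ^ (m - 1) *
                (\<Sum>n=0..a-1. bernpoly m (real h * of_int \<lceil>real n / real s\<rceil> + real n * real d / real a))
              - bernoulli m)
       \<and> (\<forall>z::complex.
            exp (of_nat d * z) - 1 \<noteq> 0 \<and> exp (of_nat a * z) - 1 \<noteq> 0 \<and>
            exp (of_nat (h * a + s * d) * z) - 1 \<noteq> 0 \<and> exp (- (of_nat d * z)) - 1 \<noteq> 0 \<and>
            exp z - 1 \<noteq> 0 \<longrightarrow>
            (\<lambda>m. complex_of_real (S m) * z ^ m / fact m) sums
              ((exp ((of_nat h * of_int \<lceil>real (a - 1) / real s\<rceil> + of_nat d) * of_nat a * z) - 1)
                 / ((exp (of_nat d * z) - 1) * (exp (of_nat a * z) - 1))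
               + ((exp (of_nat a * of_nat h * z) - 1)
                   * (exp (of_int \<lceil>real (a - 1) / real s\<rceil> * (of_nat h * of_nat a + of_nat s * of_nat d) * z) - 1))
                 / ((exp (of_nat a * z) - 1) * (exp ((of_nat h * of_nat a + of_nat s * of_nat d) * z) - 1)
                    * (exp (- (of_nat d * z)) - 1))
               - 1 / (exp z - 1)))"
  proof -
  note ctx = assms(1-6)
  have NReq: "NR = {x. x > 0 \<and> x \<notin> T a d h s}"
    unfolding NR_def T_def[OF ctx] by simp
  have P1: "\<forall>m::nat. m \<ge> 1 \<longrightarrow>
            real m * S (m - 1) =
              real a ^ (m - 1) *
                (\<Sum>n=0..a-1. bernpoly m (real h * of_int \<lceil>real n / real s\<rceil> + real n * real d / real a))
              - bernoulli m"
  proof (intro allI impI)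
    fix m :: nat assume m1: "m \<ge> 1"
    show "real m * S (m - 1) = real a ^ (m - 1) *
                (\<Sum>n=0..a-1. bernpoly m (real h * of_int \<lceil>real n / real s\<rceil> + real n * real d / real a))
              - bernoulli m"
      unfolding S_def NReq by (rule part1[OF ctx m1])
  qed
  have P2: "\<forall>z::complex.
            exp (of_nat d * z) - 1 \<noteq> 0 \<and> exp (of_nat a * z) - 1 \<noteq> 0 \<and>
            exp (of_nat (h * a + s * d) * z) - 1 \<noteq> 0 \<and> exp (- (of_nat d * z)) - 1 \<noteq> 0 \<and>
            exp z - 1 \<noteq> 0 \<longrightarrow>
            (\<lambda>m. complex_of_real (S m) * z ^ m / fact m) sums
              ((exp ((of_nat h * of_int \<lceil>real (a - 1) / real s\<rceil> + of_nat d) * of_nat a * z) - 1)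
                 / ((exp (of_nat d * z) - 1) * (exp (of_nat a * z) - 1))
               + ((exp (of_nat a * of_nat h * z) - 1)
                   * (exp (of_int \<lceil>real (a - 1) / real s\<rceil> * (of_nat h * of_nat a + of_nat s * of_nat d) * z) - 1))
                 / ((exp (of_nat a * z) - 1) * (exp ((of_nat h * of_nat a + of_nat s * of_nat d) * z) - 1)
                    * (exp (- (of_nat d * z)) - 1))
               - 1 / (exp z - 1))"
  proof (intro allI impI)
    fix z :: complex
    assume H: "exp (of_nat d * z) - 1 \<noteq> 0 \<and> exp (of_nat a * z) - 1 \<noteq> 0 \<and>
            exp (of_nat (h * a + s * d) * z) - 1 \<noteq> 0 \<and> exp (- (of_nat d * z)) - 1 \<noteq> 0 \<and>
            exp z - 1 \<noteq> 0"
    have fun_eq: "(\<lambda>m. complex_of_real (S m) * z ^ m / fact m) = (\<lambda>m. \<Sum>x\<in>NR. (of_nat x * z) ^ m /\<^sub>R fact m)"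
    proof
      fix m
      have "complex_of_real (S m) * z ^ m / fact m = (\<Sum>x\<in>NR. of_real (real x ^ m) * z ^ m / fact m)"
        unfolding S_def of_real_sum by (simp add: sum_distrib_right sum_divide_distrib)
      also have "\<dots> = (\<Sum>x\<in>NR. (of_nat x * z) ^ m /\<^sub>R fact m)"
      proof (rule sum.cong[OF refl])
        fix x
        have "(of_nat x * z) ^ m /\<^sub>R fact m = of_real (inverse (fact m)) * ((of_nat x) ^ m * z ^ m)"
          by (simp add: scaleR_conv_of_real power_mult_distrib)
        also have "\<dots> = of_real (real x ^ m) * z ^ m / fact m"
          by (simp add: divide_inverse of_real_inverse mult_ac)
        finally show "of_real (real x ^ m) * z ^ m / fact m = (of_nat x * z) ^ m /\<^sub>R fact m" by simp
      qed
      finally show "complex_of_real (S m) * z ^ m / fact m = (\<Sum>x\<in>NR. (of_nat x * z) ^ m /\<^sub>R fact m)" .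
    qed
    have "(\<lambda>m. \<Sum>x\<in>NR. (of_nat x * z) ^ m /\<^sub>R fact m) sums (\<Sum>x\<in>NR. exp (of_nat x * z))"
      by (rule sums_sum) (rule exp_converges)
    also have "(\<Sum>x\<in>NR. exp (of_nat x * z)) =
              ((exp ((of_nat h * of_int \<lceil>real (a - 1) / real s\<rceil> + of_nat d) * of_nat a * z) - 1)
                 / ((exp (of_nat d * z) - 1) * (exp (of_nat a * z) - 1))
               + ((exp (of_nat a * of_nat h * z) - 1)
                   * (exp (of_int \<lceil>real (a - 1) / real s\<rceil> * (of_nat h * of_nat a + of_nat s * of_nat d) * z) - 1))
                 / ((exp (of_nat a * z) - 1) * (exp ((of_nat h * of_nat a + of_nat s * of_nat d) * z) - 1)
                    * (exp (- (of_nat d * z)) - 1))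
               - 1 / (exp z - 1))"
      unfolding NReq using H by (intro part2[OF ctx]) auto
    finally show "(\<lambda>m. complex_of_real (S m) * z ^ m / fact m) sums
              ((exp ((of_nat h * of_int \<lceil>real (a - 1) / real s\<rceil> + of_nat d) * of_nat a * z) - 1)
                 / ((exp (of_nat d * z) - 1) * (exp (of_nat a * z) - 1))
               + ((exp (of_nat a * of_nat h * z) - 1)
                   * (exp (of_int \<lceil>real (a - 1) / real s\<rceil> * (of_nat h * of_nat a + of_nat s * of_nat d) * z) - 1))
                 / ((exp (of_nat a * z) - 1) * (exp ((of_nat h * of_nat a + of_nat s * of_nat d) * z) - 1)
                    * (exp (- (of_nat d * z)) - 1))
               - 1 / (exp z - 1))" unfolding fun_eq .
  qed
  show ?thesis using P1 P2 by blast
qed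

end
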